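(* Let $(J,k_1,\dots,k_J)$ be a permissible decomposition of $Q$ and $A\in I_{J,k_1,\dots,k_J}$. Then there is $\delta>0$ such that for every $B\in I_{J,k_1,\dots,k_J}$ with $\mathcal{G}(A,B)<\delta$, every geodesic $\gamma:[0,1]\to\mathbb{Q}_Q(\mathbb{R}^n)$ from $A$ to $B$ satisfies $\gamma(t)\in I_{J,k_1,\dots,k_J}$ for all $t\in[0,1]$.
   Context: $\mathbb{Q}_Q(\mathbb{R}^n)$ denotes the set of unordered $Q$-tuples of points of $\mathbb{R}^n$, written $\sum_{i=1}^Q[[a_i]]$ (two such sums are equal iff the tuples agree up to a permutation; $k[[a]]$ means $k$ copies of $a$), with metric $\mathcal{G}\big(\sum_i[[a_i]],\sum_i[[b_i]]\big)=\min_{\sigma}\big(\sum_{i}|a_i-b_{\sigma(i)}|^2\big)^{1/2}$ over permutations $\sigma$. A permissible decomposition of $Q$ is a tuple $(J,k_1,\dots,k_J)$ of positive integers with $k_1\le\dots\le k_J$ and $\sum_i k_i=Q$. Every $x$ can be written uniquely as $x=\sum_{i=1}^J k_i[[x_i]]$ with $x_1,\dots,x_J$ distinct and $k_1\le\dots\le k_J$; its signature is $S(x)=(J,k_1,\dots,k_J)$, and $I_{J,k_1,\dots,k_J}=\{x:S(x)=(J,k_1,\dots,k_J)\}$. A geodesic from $A$ to $B$ is a curve $\gamma:[0,1]\to\mathbb{Q}_Q(\mathbb{R}^n)$ with $\gamma(0)=A$, $\gamma(1)=B$ and $\mathcal{G}(\gamma(s),\gamma(t))=|t-s|\,\mathcal{G}(A,B)$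 for all $s,t$. *)

theory Defs
  imports "HOL-Analysis.Analysis" "HOL-Library.Multiset"
begin

text \<open>Q-points of a Euclidean space 'a (standing for R^n): unordered Q-tuples,
  represented as multisets of size Q.\<close>

definition QPoints :: "nat \<Rightarrow> 'a multiset set" where
  "QPoints Q = {x. size x = Q}"

definition Gdist :: "'a::euclidean_space multiset \<Rightarrow> 'a multiset \<Rightarrow> real" where
  "Gdist X Y = Min {sqrt (\<Sum>i<length xs. (norm (xs ! i - ys ! i))\<^sup>2) | xs ys.
                      mset xs = X \<and> mset ys = Y}"

definition permissible :: "nat \<Rightarrow> nat \<times> nat list \<Rightarrow> bool" where
  "permissible Q d \<longleftrightarrow> (case d of (J, ks) \<Rightarrow>
      J \<ge> 1 \<and> length ks = J \<and> (\<forall>k \<in> set ks. k > 0) \<and> sorted ks \<and> sum_list ks = Q)"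

definition signature :: "'a multiset \<Rightarrow> nat \<times> nat list" where
  "signature x = (card (set_mset x), sorted_list_of_multiset (image_mset (count x) (mset_set (set_mset x))))"

definition stratum :: "nat \<Rightarrow> nat \<times> nat list \<Rightarrow> 'a multiset set" where
  "stratum Q d = {x \<in> QPoints Q. signature x = d}"

definition is_geodesic ::
  "nat \<Rightarrow> (real \<Rightarrow> 'a::euclidean_space multiset) \<Rightarrow> 'a multiset \<Rightarrow> 'a multiset \<Rightarrow> bool" where
  "is_geodesic Q \<gamma> A B \<longleftrightarrow> (\<forall>t\<in>{0..1}. \<gamma> t \<in> QPoints Q) \<and> \<gamma> 0 = A \<and> \<gamma> 1 = B \<and>
     (\<forall>s\<in>{0..1}. \<forall>t\<in>{0..1}. Gdist (\<gamma> s) (\<gamma> t) = \<bar>t - s\<bar> * Gdist A B)"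

end

theory Submission
  imports Defs "HOL-Combinatorics.Permutations"
begin

definition cost :: "'a::euclidean_space list \<Rightarrow> 'a list \<Rightarrow> real" where
  "cost xs ys = (\<Sum>i<length xs. (norm (xs ! i - ys ! i))\<^sup>2)"

lemma cost_nonneg: "cost xs ys \<ge> 0"
  unfolding cost_def by (simp add: sum_nonneg)

lemma Gdist_cands_finite:
  "finite {sqrt (\<Sum>i<length xs. (norm (xs ! i - ys ! i))\<^sup>2) | xs ys.
                      mset xs = X \<and> mset ys = Y}" (is "finite ?C")
proof -
  let ?P = "{xs. set xs \<subseteq> set_mset X \<and> length xs = size X} \<times> {ys. set ys \<subseteq> set_mset Y \<and> length ys = size Y}"
  have "finite ?P" by (intro finite_cartesian_product finite_lists_length_eq) auto
  moreover have "?C \<subseteq> (\<lambda>(xs,ys). sqrt (\<Sum>i<length xs. (norm (xs ! i - ys ! i))\<^sup>2)) ` ?P"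
    by (force simp: image_iff)
  ultimately show ?thesis by (meson finite_imageI finite_subset)
qed

lemma Gdist_attained:
  obtains xs ys where "mset xs = X" "mset ys = Y" "Gdist X Y = sqrt (cost xs ys)"
proof -
  obtain xs where "mset xs = X" using ex_mset by blast
  moreover obtain ys where "mset ys = Y" using ex_mset by blast
  ultimately have ne: "{sqrt (\<Sum>i<length xs. (norm (xs ! i - ys ! i))\<^sup>2) | xs ys.
                      mset xs = X \<and> mset ys = Y} \<noteq> {}" by blast
  from Min_in[OF Gdist_cands_finite ne] obtain xs ys where
    "mset xs = X" "mset ys = Y" "Gdist X Y = sqrt (\<Sum>i<length xs. (norm (xs ! i - ys ! i))\<^sup>2)"
    unfolding Gdist_def by auto
  then show ?thesis using that unfolding cost_def by blast
qed

lemma Gdist_le: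
  assumes "mset xs = X" "mset ys = Y"
  shows "Gdist X Y \<le> sqrt (cost xs ys)"
  unfolding Gdist_def cost_def
  by (rule Min_le[OF Gdist_cands_finite]) (use assms in blast)

lemma reorder:
  assumes "mset zs = mset zs'" "length bs = length zs'"
  obtains bs' where "mset bs' = mset bs" "length bs' = length zs" "cost zs bs' = cost zs' bs"
proof -
  obtain p where p: "p permutes {..<length zs'}" "permute_list p zs' = zs"
    using mset_eq_permutation[OF assms(1)] by blast
  have len: "length zs = length zs'" using assms(1) by (metis size_mset)
  have p2: "p permutes {..<length bs}" using p(1) assms(2) by simp
  let ?bs = "permute_list p bs"
  have "cost zs ?bs = (\<Sum>i<length zs'. (norm (zs' ! p i - bs ! p i))\<^sup>2)"
    unfolding cost_def len using p p2 assms(2)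
    by (intro sum.cong) (auto simp: permute_list_nth)
  also have "\<dots> = cost zs' bs"
    unfolding cost_def using sum.permute[OF p(1), of "\<lambda>i. (norm (zs' ! i - bs ! i))\<^sup>2"]
    by (simp add: comp_def)
  finally show ?thesis using that[of ?bs] p2 len assms(2) by simp
qed

lemma key_algebra:
  fixes a b z :: "nat \<Rightarrow> 'a::real_inner"
  assumes t: "0 \<le> t" "t \<le> 1"
    and A: "(\<Sum>i<n. (norm (a i - z i))\<^sup>2) = t\<^sup>2 * G\<^sup>2"
    and B: "(\<Sum>i<n. (norm (z i - b i))\<^sup>2) = (1-t)\<^sup>2 * G\<^sup>2"
    and C: "G\<^sup>2 \<le> (\<Sum>i<n. (norm (a i - b i))\<^sup>2)"
  shows "\<forall>i<n. z i = (1-t) *\<^sub>R a i + t *\<^sub>R b i"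
proof -
  have pt: "(norm (z i - ((1-t) *\<^sub>R a i + t *\<^sub>R b i)))\<^sup>2 =
     (1-t)\<^sup>2 * (norm (a i - z i))\<^sup>2 + t\<^sup>2 * (norm (z i - b i))\<^sup>2
     + t*(1-t) * ((norm (a i - z i))\<^sup>2 + (norm (z i - b i))\<^sup>2 - (norm (a i - b i))\<^sup>2)" for i
  proof -
    define u where "u = z i - a i"
    define v where "v = z i - b i"
    have e1: "z i - ((1-t) *\<^sub>R a i + t *\<^sub>R b i) = (1-t) *\<^sub>R u + t *\<^sub>R v"
      unfolding u_def v_def by (simp add: algebra_simps)
    have e2: "a i - z i = - u" "a i - b i = v - u" unfolding u_def v_def by (simp_all add: algebra_simps)
    have e3: "z i - b i = v" unfolding v_def ..
    show ?thesis unfolding e1 e2 e3 norm_minus_cancel power2_norm_eq_inner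
      by (simp add: inner_simps power2_eq_square algebra_simps inner_commute)
  qed
  have "(\<Sum>i<n. (norm (z i - ((1-t) *\<^sub>R a i + t *\<^sub>R b i)))\<^sup>2) =
     (1-t)\<^sup>2 * (\<Sum>i<n. (norm (a i - z i))\<^sup>2) + t\<^sup>2 * (\<Sum>i<n. (norm (z i - b i))\<^sup>2)
     + t*(1-t) * ((\<Sum>i<n. (norm (a i - z i))\<^sup>2) + (\<Sum>i<n. (norm (z i - b i))\<^sup>2) - (\<Sum>i<n. (norm (a i - b i))\<^sup>2))"
    unfolding pt by (simp add: sum.distrib sum_distrib_left sum_subtractf algebra_simps)
  also have "\<dots> \<le> (1-t)\<^sup>2 * (t\<^sup>2 * G\<^sup>2) + t\<^sup>2 * ((1-t)\<^sup>2 * G\<^sup>2) + t*(1-t) * (t\<^sup>2 * G\<^sup>2 + (1-t)\<^sup>2 * G\<^sup>2 - G\<^sup>2)"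
    unfolding A B using C t by (intro add_left_mono mult_left_mono) auto
  also have "\<dots> = 0" by (simp add: power2_eq_square algebra_simps)
  finally have le: "(\<Sum>i<n. (norm (z i - ((1-t) *\<^sub>R a i + t *\<^sub>R b i)))\<^sup>2) \<le> 0" .
  have "\<forall>i\<in>{..<n}. (norm (z i - ((1-t) *\<^sub>R a i + t *\<^sub>R b i)))\<^sup>2 = 0"
    using sum_nonneg_eq_0_iff[of "{..<n}" "\<lambda>i. (norm (z i - ((1-t) *\<^sub>R a i + t *\<^sub>R b i)))\<^sup>2"] le
    by (simp add: sum_nonneg antisym)
  then show ?thesis by simp
qed

lemma signature_image:
  assumes "inj_on f (set_mset A)"
  shows "signature (image_mset f A) = signature A"
proof -
  have cnt: "count (image_mset f A) (f x) = count A x" if "x \<in> set_mset A" for x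
  proof -
    have "f -` {f x} \<inter> set_mset A = {x}" using assms that by (auto dest: inj_onD)
    then show ?thesis by (simp add: count_image_mset)
  qed
  have "image_mset (count (image_mset f A)) (mset_set (set_mset (image_mset f A)))
      = image_mset (count (image_mset f A)) (image_mset f (mset_set (set_mset A)))"
    by (simp add: image_mset_mset_set[OF assms])
  also have "\<dots> = image_mset (count A) (mset_set (set_mset A))"
    by (auto simp: multiset.map_comp comp_def cnt intro!: image_mset_cong)
  finally show ?thesis unfolding signature_def using card_image[OF assms] by simp
qed

lemma sep_exists:
  fixes S :: "'a::metric_space set"
  assumes "finite S"
  shows "\<exists>\<delta>>0. \<forall>x\<in>S. \<forall>y\<in>S. x \<noteq> y \<longrightarrow> 2 * \<delta> \<le> dist x y"
proof (cases "{dist x y | x y. x \<in> S \<and> y \<in> S \<and> x \<noteq> y} = {}")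
  case True
  then show ?thesis by (intro exI[of _ 1]) auto
next
  case False
  let ?D = "{dist x y | x y. x \<in> S \<and> y \<in> S \<and> x \<noteq> y}"
  have fin: "finite ?D"
  proof -
    have "?D \<subseteq> (\<lambda>(x,y). dist x y) ` (S \<times> S)" by auto
    then show ?thesis using assms by (meson finite_SigmaI finite_imageI finite_subset)
  qed
  have pos: "Min ?D > 0" using Min_in[OF fin False] by auto
  show ?thesis
    by (intro exI[of _ "Min ?D / 2"]) (use pos Min_le[OF fin] in auto)
qed

theorem theorem3p12:
  fixes Q J :: nat and ks :: "nat list" and A :: "'a::euclidean_space multiset"
  assumes "permissible Q (J, ks)"
    and "A \<in> stratum Q (J, ks)"
  shows "\<exists>\<delta>>0. \<forall>B \<in> stratum Q (J, ks). Gdist A B < \<delta> \<longrightarrow>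
           (\<forall>\<gamma>. is_geodesic Q \<gamma> A B \<longrightarrow> (\<forall>t\<in>{0..1}. \<gamma> t \<in> stratum Q (J, ks)))"
proof -
  have sizeA: "size A = Q" and sigA: "signature A = (J, ks)"
    using assms(2) by (auto simp: stratum_def QPoints_def)
  have cardA: "card (set_mset A) = J" using sigA by (simp add: signature_def)
  obtain \<delta> :: real where dpos: "\<delta> > 0" and sep: "\<forall>x\<in>set_mset A. \<forall>y\<in>set_mset A. x \<noteq> y \<longrightarrow> 2 * \<delta> \<le> dist x y"
    using sep_exists[of "set_mset A"] by auto
  have uniq: "x = y" if "x \<in> set_mset A" "y \<in> set_mset A" "dist p x < \<delta>" "dist p y < \<delta>" for x y p
  proof (rule ccontr)
    assume "x \<noteq> y"
    then have "2 * \<delta> \<le> dist x y" using sep that by auto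
    moreover have "dist x y \<le> dist p x + dist p y" by (metis dist_commute dist_triangle)
    ultimately show False using that by auto
  qed
  show ?thesis
  proof (intro exI[of _ \<delta>] conjI dpos ballI impI allI)
    fix B \<gamma> and t :: real
    assume B: "B \<in> stratum Q (J, ks)" and GAB: "Gdist A B < \<delta>" and geo: "is_geodesic Q \<gamma> A B"
      and t: "t \<in> {0..1}"
    have sizeB: "size B = Q" and sigB: "signature B = (J, ks)"
      using B by (auto simp: stratum_def QPoints_def)
    have cardB: "card (set_mset B) = J" using sigB by (simp add: signature_def)
    have g0: "\<gamma> 0 = A" and g1: "\<gamma> 1 = B" using geo by (auto simp: is_geodesic_def)
    show "\<gamma> t \<in> stratum Q (J, ks)"
    proof (cases "t = 0 \<or> t = 1")
      case True
      then show ?thesis using g0 g1 assms(2) B by auto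
    next
      case False
      with t have t0: "0 < t" and t1: "t < 1" by auto
      define z where "z = \<gamma> t"
      define G where "G = Gdist A B"
      have sizez: "size z = Q" using geo t by (auto simp: is_geodesic_def QPoints_def z_def)
      have GAz: "Gdist A z = t * G"
        using geo t unfolding is_geodesic_def z_def G_def
        by (metis atLeastAtMost_iff g0 abs_of_nonneg diff_zero order_refl zero_le_one)
      have GzB: "Gdist z B = (1 - t) * G"
        using geo t t1 unfolding is_geodesic_def z_def G_def
        by (metis atLeastAtMost_iff g1 abs_of_nonneg diff_ge_0_iff_ge order_refl zero_le_one)
      obtain as zs where as: "mset as = A" and zs: "mset zs = z" and c1: "Gdist A z = sqrt (cost as zs)"
        by (rule Gdist_attained)
      obtain zs' bs0 where zs': "mset zs' = z" and bs0: "mset bs0 = B" and c2: "Gdist z B = sqrt (cost zs' bs0)"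
        by (rule Gdist_attained)
      have lens: "length as = Q" "length zs = Q" "length zs' = Q" "length bs0 = Q"
        using as zs zs' bs0 sizeA sizeB sizez by (metis size_mset)+
      obtain bs where bs: "mset bs = B" and lbs: "length bs = Q" and c3: "cost zs bs = cost zs' bs0"
      proof (rule reorder[of zs zs' bs0])
        show "mset zs = mset zs'" using zs zs' by simp
        show "length bs0 = length zs'" using lens by simp
      next
        fix bs' assume "mset bs' = mset bs0" "length bs' = length zs" "cost zs bs' = cost zs' bs0"
        then show thesis using that bs0 lens by simp
      qed
      have Gnn: "G \<ge> 0"
      proof -
        obtain xs ys where "mset xs = A" "mset ys = B" "Gdist A B = sqrt (cost xs ys)" by (rule Gdist_attained)
        then show ?thesis unfolding G_def by (simp add: cost_nonneg)
      qed
      have C1: "cost as zs = t\<^sup>2 * G\<^sup>2"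
        using c1 GAz cost_nonneg[of as zs] t0 Gnn
        by (metis power_mult_distrib real_sqrt_ge_0_iff real_sqrt_pow2_iff)
      have C2: "cost zs bs = (1-t)\<^sup>2 * G\<^sup>2"
        using c2 GzB c3 cost_nonneg[of zs' bs0] t1 Gnn
        by (metis power_mult_distrib real_sqrt_ge_0_iff real_sqrt_pow2_iff)
      have C3: "G\<^sup>2 \<le> cost as bs"
        using Gdist_le[OF as bs] Gnn cost_nonneg[of as bs] unfolding G_def
        by (metis power_mono real_sqrt_pow2)
      have zeq: "\<forall>i<Q. zs ! i = (1-t) *\<^sub>R as ! i + t *\<^sub>R bs ! i"
      proof (rule key_algebra[where t=t and n=Q and a="\<lambda>i. as ! i" and z="\<lambda>i. zs ! i" and G=G and b="\<lambda>i. bs ! i"])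
        show "0 \<le> t" "t \<le> 1" using t0 t1 by auto
        show "(\<Sum>i<Q. (norm (as ! i - zs ! i))\<^sup>2) = t\<^sup>2 * G\<^sup>2" using C1 lens unfolding cost_def by simp
        show "(\<Sum>i<Q. (norm (zs ! i - bs ! i))\<^sup>2) = (1-t)\<^sup>2 * G\<^sup>2" using C2 lens unfolding cost_def by simp
        show "G\<^sup>2 \<le> (\<Sum>i<Q. (norm (as ! i - bs ! i))\<^sup>2)" using C3 lens unfolding cost_def by simp
      qed
      have "cost as zs = t\<^sup>2 * cost as bs"
      proof -
        have "norm (as ! i - zs ! i) = t * norm (as ! i - bs ! i)" if "i < Q" for i
        proof -
          have "as ! i - zs ! i = t *\<^sub>R (as ! i - bs ! i)" using zeq that by (simp add: algebra_simps)
          then show ?thesis using t0 by simp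
        qed
        then show ?thesis unfolding cost_def lens by (simp add: sum_distrib_left power_mult_distrib)
      qed
      then have cab: "cost as bs = G\<^sup>2" using C1 t0 by simp
      have near: "dist (as ! i) (bs ! i) < \<delta>" if "i < Q" for i
      proof -
        have "(norm (as ! i - bs ! i))\<^sup>2 \<le> cost as bs"
          unfolding cost_def lens
          by (rule member_le_sum[of i "{..<Q}" "\<lambda>i. (norm (as ! i - bs ! i))\<^sup>2"]) (use that in auto)
        also have "\<dots> < \<delta>\<^sup>2" using cab Gnn GAB unfolding G_def by (simp add: power_strict_mono)
        finally show ?thesis using dpos by (simp add: dist_norm power_less_imp_less_base)
      qed
      have setA: "set_mset A = {as ! i | i. i < Q}" using as lens by (auto simp: set_conv_nth)
      have setB: "set_mset B = {bs ! i | i. i < Q}" using bs lbs by (auto simp: set_conv_nth)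
      define h where "h b = (SOME x. x \<in> set_mset A \<and> dist b x < \<delta>)" for b
      have hb: "h (bs ! i) = as ! i" if "i < Q" for i
      proof -
        have ex: "as ! i \<in> set_mset A \<and> dist (bs ! i) (as ! i) < \<delta>"
          using near[OF that] setA that by (auto simp: dist_commute)
        then have "h (bs ! i) \<in> set_mset A \<and> dist (bs ! i) (h (bs ! i)) < \<delta>"
          unfolding h_def by (rule someI)
        then show ?thesis using uniq ex by blast
      qed
      have himg: "h ` set_mset B = set_mset A"
      proof
        show "h ` set_mset B \<subseteq> set_mset A" using hb setA setB by auto
        show "set_mset A \<subseteq> h ` set_mset B"
        proof
          fix x assume "x \<in> set_mset A"
          then obtain i where i: "i < Q" "x = as ! i" using setA by auto
          then have "bs ! i \<in> set_mset B" using setB by auto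
          then show "x \<in> h ` set_mset B" using hb[OF i(1)] i(2) by (metis image_eqI)
        qed
      qed
      have injh: "inj_on h (set_mset B)"
        by (rule eq_card_imp_inj_on) (use himg cardA cardB in auto)
      have cons: "bs ! i = bs ! j" if "i < Q" "j < Q" "as ! i = as ! j" for i j
        using inj_onD[OF injh, of "bs ! i" "bs ! j"] hb that setB by auto
      define g where "g x = bs ! (SOME i. i < Q \<and> as ! i = x)" for x
      have gi: "g (as ! i) = bs ! i" if "i < Q" for i
      proof -
        have "(SOME j. j < Q \<and> as ! j = as ! i) < Q \<and> as ! (SOME j. j < Q \<and> as ! j = as ! i) = as ! i"
          by (rule someI[of _ i]) (use that in auto)
        then show ?thesis unfolding g_def using cons that by metis
      qed
      define f where "f x = (1-t) *\<^sub>R x + t *\<^sub>R g x" for x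
      have fi: "f (as ! i) = zs ! i" if "i < Q" for i
        using zeq gi that unfolding f_def by simp
      have fnear: "dist (f (as ! i)) (as ! i) < \<delta>" if "i < Q" for i
      proof -
        have "f (as ! i) - as ! i = t *\<^sub>R (bs ! i - as ! i)"
          using gi[OF that] unfolding f_def by (simp add: algebra_simps)
        then have "dist (f (as ! i)) (as ! i) = t * dist (bs ! i) (as ! i)"
          using t0 by (simp add: dist_norm)
        also have "\<dots> \<le> dist (bs ! i) (as ! i)" by (rule mult_left_le_one_le) (use t0 t1 in auto)
        finally show ?thesis using near[OF that] by (simp add: dist_commute)
      qed
      have injf: "inj_on f (set_mset A)"
      proof (rule inj_onI)
        fix x y assume x: "x \<in> set_mset A" and y: "y \<in> set_mset A" and e: "f x = f y"
        obtain i where i: "i < Q" "x = as ! i" using x setA by auto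
        obtain j where j: "j < Q" "y = as ! j" using y setA by auto
        show "x = y" using uniq[OF x y, of "f x"] fnear[OF i(1)] fnear[OF j(1)] i j e by auto
      qed
      have "map f as = zs" using fi lens by (intro nth_equalityI) auto
      then have zA: "z = image_mset f A" using zs as by (metis mset_map)
      have "signature z = (J, ks)" using signature_image[OF injf] zA sigA by simp
      then show ?thesis using sizez unfolding z_def stratum_def QPoints_def by simp
    qed
  qed
qed

end
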